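(* Fix a single-item interdependent-values setting and let $\mathcal M$ be a universally ex-post IC-IR mechanism that is an $\alpha$-approximation to the optimal welfare, i.e., for every signal profile $\mathbf s$ the expected welfare of $\mathcal M$ when all bidders bid truthfully ($\mathbf b=\mathbf s$) is at least $\mathrm{OPT}(\mathbf s)/\alpha$. For $\epsilon\in(0,1)$ let $\mathcal M'$ be the randomized mechanism that runs $\mathcal M$ with probability $1-\epsilon$ and the proportional allocation mechanism with probability $\epsilon$. Then the price of anarchy of $\mathcal M'$ with respect to pure Nash equilibria under no-overbidding is at most $\frac{\alpha}{1-\epsilon}$: for every signal profile $\mathbf s$ and every pure Nash equilibrium $\mathbf b$ of $\mathcal M'$ at $\mathbf s$ under no-overbidding, $\mathrm{OPT}(\mathbf s)\le\frac{\alpha}{1-\epsilon}\,\mathbb E[\mathrm{SW}_{\mathcal M'}(\mathbf b,\mathbf s)]$.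
   Context: Single-item interdependent-values setting: bidders $i\in[n]$ have private signals $s_i\in S_i\subseteq\mathbb R_{\ge0}$ (intervals) and publicly known valuations $v_i:S_1\times\dots\times S_n\to\mathbb R_{\ge0}$, weakly increasing in every coordinate and strictly increasing in $s_i$. A deterministic mechanism $(x,p)$ solicits bids $b_i\in S_i$, outputs $x_i(\mathbf b)\in\{0,1\}$ with $\sum_ix_i\le1$ and payments $p_i(\mathbf b)$; utility $u_i(\mathbf b;\mathbf s)=x_i(\mathbf b)v_i(\mathbf s)-p_i(\mathbf b)$. Ex-post IC-IR: for every $\mathbf s$, $i$, $b_i\in S_i$: $x_i(\mathbf s)v_i(\mathbf s)-p_i(\mathbf s)\ge\max\{x_i(b_i,\mathbf s_{-i})v_i(\mathbf s)-p_i(b_i,\mathbf s_{-i}),0\}$. Universally ex-post IC-IR: a probability distribution over deterministic ex-post IC-IR mechanisms. Proportional allocation mechanism: given $\mathbf b$, allocates the item to bidder $i$ with probability $\frac{b_i}{\sum_jb_j+1}$ and charges no payments. $\mathrm{OPT}(\mathbf s)=\max_iv_i(\mathbf s)$; $\mathrm{SW}_{\mathcal M'}(\mathbf b,\mathbf s)=\sum_ix_i(\mathbf b)v_i(\mathbf s)$ (random). A pure Nash equilibrium at $\mathbf s$ under no-overbidding is a bid profile $\mathbf b\le\mathbf s$ such that for every $i$ and every $b_i'\in S_i$ with $b_i'\le s_i$, $\mathbb E[u_i((b_i',\mathbf b_{-i});\mathbf s)]\le\mathbb E[u_i(\mathbf b;\mathbf s)]$ (expectations over the mechanism's randomness). 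*)

theory Defs
  imports "HOL-Probability.Probability"
begin

text \<open>A deterministic mechanism is a pair (x, p) of an
  allocation rule x b i (in {0,1}) and a payment rule p b i.\<close>

type_synonym 'i mech = "(('i \<Rightarrow> real) \<Rightarrow> 'i \<Rightarrow> real) \<times> (('i \<Rightarrow> real) \<Rightarrow> 'i \<Rightarrow> real)"

definition profiles :: "('i \<Rightarrow> real set) \<Rightarrow> ('i \<Rightarrow> real) set" where
  "profiles S = {s. \<forall>i. s i \<in> S i}"

definition valid_setting :: "('i::finite \<Rightarrow> real set) \<Rightarrow> ('i \<Rightarrow> ('i \<Rightarrow> real) \<Rightarrow> real) \<Rightarrow> bool" where
  "valid_setting S v \<longleftrightarrow>
     (\<forall>i. is_interval (S i) \<and> S i \<subseteq> {0..}) \<and>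
     (\<forall>i. \<forall>s\<in>profiles S. v i s \<ge> 0) \<and>
     (\<forall>i j. \<forall>s\<in>profiles S. \<forall>t\<in>S j. s j \<le> t \<longrightarrow> v i s \<le> v i (s(j := t))) \<and>
     (\<forall>i. \<forall>s\<in>profiles S. \<forall>t\<in>S i. s i < t \<longrightarrow> v i s < v i (s(i := t)))"

definition OPT :: "('i::finite \<Rightarrow> ('i \<Rightarrow> real) \<Rightarrow> real) \<Rightarrow> ('i \<Rightarrow> real) \<Rightarrow> real" where
  "OPT v s = Max (range (\<lambda>i. v i s))"

definition det_ex_post_IC_IR ::
  "('i::finite \<Rightarrow> real set) \<Rightarrow> ('i \<Rightarrow> ('i \<Rightarrow> real) \<Rightarrow> real) \<Rightarrow> 'i mech \<Rightarrow> bool" where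
  "det_ex_post_IC_IR S v M \<longleftrightarrow>
     (let x = fst M; p = snd M in
       (\<forall>b\<in>profiles S. (\<forall>i. x b i \<in> {0, 1}) \<and> (\<Sum>i\<in>UNIV. x b i) \<le> 1) \<and>
       (\<forall>s\<in>profiles S. \<forall>i. \<forall>bi\<in>S i.
          x s i * v i s - p s i \<ge>
            max (x (s(i := bi)) i * v i s - p (s(i := bi)) i) 0))"

text \<open>A universally ex-post IC-IR mechanism: a probability distribution D over
  deterministic ex-post IC-IR mechanisms (allocations and payments integrable,
  so that all expectations are well defined).\<close>

definition univ_ex_post_IC_IR ::
  "('i::finite \<Rightarrow> real set) \<Rightarrow> ('i \<Rightarrow> ('i \<Rightarrow> real) \<Rightarrow> real) \<Rightarrow> 'i mech measure \<Rightarrow> bool" where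
  "univ_ex_post_IC_IR S v D \<longleftrightarrow>
     prob_space D \<and>
     (\<forall>M\<in>space D. det_ex_post_IC_IR S v M) \<and>
     (\<forall>b\<in>profiles S. \<forall>i. integrable D (\<lambda>M. fst M b i) \<and> integrable D (\<lambda>M. snd M b i))"

definition exp_welfare_M ::
  "('i::finite \<Rightarrow> ('i \<Rightarrow> real) \<Rightarrow> real) \<Rightarrow> 'i mech measure \<Rightarrow> ('i \<Rightarrow> real) \<Rightarrow> ('i \<Rightarrow> real) \<Rightarrow> real" where
  "exp_welfare_M v D b s = (\<integral>M. (\<Sum>i\<in>UNIV. fst M b i * v i s) \<partial>D)"

definition alpha_approx ::
  "('i::finite \<Rightarrow> real set) \<Rightarrow> ('i \<Rightarrow> ('i \<Rightarrow> real) \<Rightarrow> real) \<Rightarrow> 'i mech measure \<Rightarrow> real \<Rightarrow> bool" where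
  "alpha_approx S v D \<alpha> \<longleftrightarrow> (\<forall>s\<in>profiles S. OPT v s / \<alpha> \<le> exp_welfare_M v D s s)"

definition prop_alloc :: "('i::finite \<Rightarrow> real) \<Rightarrow> 'i \<Rightarrow> real" where
  "prop_alloc b i = b i / ((\<Sum>j\<in>UNIV. b j) + 1)"

text \<open>The mixture M': run D with probability 1 - eps, proportional allocation with
  probability eps. Expected utility and expected welfare (expectation over all
  randomness of M').\<close>

definition mix_exp_utility ::
  "('i::finite \<Rightarrow> ('i \<Rightarrow> real) \<Rightarrow> real) \<Rightarrow> 'i mech measure \<Rightarrow> real \<Rightarrow> 'i \<Rightarrow> ('i \<Rightarrow> real) \<Rightarrow> ('i \<Rightarrow> real) \<Rightarrow> real" where
  "mix_exp_utility v D \<epsilon> i b s =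
     (1 - \<epsilon>) * (\<integral>M. fst M b i * v i s - snd M b i \<partial>D) + \<epsilon> * (prop_alloc b i * v i s - 0)"

definition mix_exp_welfare ::
  "('i::finite \<Rightarrow> ('i \<Rightarrow> real) \<Rightarrow> real) \<Rightarrow> 'i mech measure \<Rightarrow> real \<Rightarrow> ('i \<Rightarrow> real) \<Rightarrow> ('i \<Rightarrow> real) \<Rightarrow> real" where
  "mix_exp_welfare v D \<epsilon> b s =
     (1 - \<epsilon>) * exp_welfare_M v D b s + \<epsilon> * (\<Sum>i\<in>UNIV. prop_alloc b i * v i s)"

definition pure_NE_no_overbid ::
  "('i::finite \<Rightarrow> real set) \<Rightarrow> ('i \<Rightarrow> ('i \<Rightarrow> real) \<Rightarrow> real) \<Rightarrow> 'i mech measure \<Rightarrow> real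
     \<Rightarrow> ('i \<Rightarrow> real) \<Rightarrow> ('i \<Rightarrow> real) \<Rightarrow> bool" where
  "pure_NE_no_overbid S v D \<epsilon> s b \<longleftrightarrow>
     b \<in> profiles S \<and> (\<forall>i. b i \<le> s i) \<and>
     (\<forall>i. \<forall>bi'\<in>S i. bi' \<le> s i \<longrightarrow>
        mix_exp_utility v D \<epsilon> i (b(i := bi')) s \<le> mix_exp_utility v D \<epsilon> i b s)"

end

theory Submission
  imports Defs
begin

lemma mono_multi:
  assumes vs: "valid_setting S v" and t: "t \<in> profiles S" and s: "s \<in> profiles S"
    and le: "\<And>j. t j \<le> s j"
  shows "v i t \<le> v i (s::'i::finite \<Rightarrow> real)"
proof -
  define f where "f A = (\<lambda>j. if j \<in> A then s j else t j)" for A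
  have fp: "f A \<in> profiles S" for A using t s unfolding f_def profiles_def by auto
  have "v i t \<le> v i (f A)" if "finite A" for A
    using that
  proof (induction A rule: finite_induct)
    case empty then show ?case by (simp add: f_def)
  next
    case (insert a A)
    have e: "f (insert a A) = (f A)(a := s a)" by (auto simp: f_def)
    have "f A a \<le> s a" using le insert by (simp add: f_def)
    moreover have "s a \<in> S a" using s by (simp add: profiles_def)
    ultimately have "v i (f A) \<le> v i ((f A)(a := s a))"
      using vs fp[of A] unfolding valid_setting_def by blast
    then show ?case using insert.IH e by (metis order_trans)
  qed
  moreover have "f UNIV = s" by (simp add: f_def)
  ultimately show ?thesis by (metis finite)
qed

lemma det_raise:
  assumes vs: "valid_setting S v" and ic: "det_ex_post_IC_IR S v M"
    and b: "b \<in> profiles S" and s: "s \<in> profiles S" and le: "\<And>j. b j \<le> s j"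
  shows "fst M b i * v i s - snd M b i \<le>
         fst M (b(i := s i)) i * v i s - snd M (b(i := s i)) i"
proof (cases "b i = s i")
  case True
  then have "b(i := s i) = b" by auto
  then show ?thesis by simp
next
  case False
  with le have lt: "b i < s i" using order_le_less by blast
  define t where "t = b(i := s i)"
  have si: "s i \<in> S i" "b i \<in> S i" using s b by (auto simp: profiles_def)
  have tp: "t \<in> profiles S" using b si unfolding t_def profiles_def by auto
  have tb: "t(i := b i) = b" unfolding t_def by auto
  have tle: "\<And>j. t j \<le> s j" using le unfolding t_def by auto
  have vts: "v i t \<le> v i s" using mono_multi[OF vs tp s tle] .
  have vbt: "v i b < v i t" using vs b si lt unfolding valid_setting_def t_def by blast
  obtain x p where M: "M = (x, p)" by (cases M)
  have x01: "x b i \<in> {0,1}" "x t i \<in> {0,1}"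
    using ic b tp unfolding det_ex_post_IC_IR_def M Let_def by auto
  have ic1: "x t i * v i t - p t i \<ge> max (x b i * v i t - p b i) 0"
    using ic tp si tb unfolding det_ex_post_IC_IR_def M Let_def
    by (metis fst_conv snd_conv)
  have ic2: "x b i * v i b - p b i \<ge> max (x t i * v i b - p t i) 0"
    using ic b si unfolding det_ex_post_IC_IR_def M Let_def t_def
    by (metis fst_conv snd_conv)
  have "x b i * v i s - p b i \<le> x t i * v i s - p t i"
    using x01 ic1 ic2 vts vbt by auto
  then show ?thesis unfolding M t_def by simp
qed

lemma prop_strict:
  assumes b: "\<And>j. b j \<ge> (0::real)" and lt: "b i < y"
  shows "prop_alloc b i < prop_alloc (b(i := y)) (i::'i::finite)"
proof -
  define B where "B = (\<Sum>j\<in>UNIV. b j)"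
  have sumup: "(\<Sum>j\<in>UNIV. (b(i := y)) j) = B - b i + y"
    unfolding B_def
    by (simp add: sum.remove[of UNIV i] sum.cong[of "UNIV - {i}" "UNIV - {i}" "b(i:=y)" b])
  have Bge: "B \<ge> b i" unfolding B_def
    using member_le_sum[of i UNIV b] b by auto
  have bi0: "b i \<ge> 0" using b by auto
  have p1: "B + 1 > 0" using Bge bi0 by linarith
  have p2: "B - b i + y + 1 > 0" using Bge bi0 lt by linarith
  have "b i * (B - b i + y + 1) < y * (B + 1)"
  proof -
    have "b i * (B - b i + y + 1) = b i * (B + 1) + b i * (y - b i)" by algebra
    also have "\<dots> < b i * (B + 1) + (B + 1) * (y - b i)"
      using Bge lt by (intro add_strict_left_mono mult_strict_right_mono) auto
    also have "\<dots> = y * (B + 1)" by algebra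
    finally show ?thesis .
  qed
  then have "b i / (B + 1) < y / (B - b i + y + 1)"
    using p1 p2 by (simp add: divide_simps)
  then show ?thesis unfolding prop_alloc_def sumup B_def[symmetric] by simp
qed

theorem mainTheorem8:
  fixes S :: "'i::finite \<Rightarrow> real set"
    and v :: "'i \<Rightarrow> ('i \<Rightarrow> real) \<Rightarrow> real"
    and D :: "'i mech measure"
    and \<alpha> \<epsilon> :: real
  assumes "valid_setting S v"
    and "univ_ex_post_IC_IR S v D"
    and "\<alpha> > 0"
    and "alpha_approx S v D \<alpha>"
    and "0 < \<epsilon>" and "\<epsilon> < 1"
  shows "\<forall>s\<in>profiles S. \<forall>b. pure_NE_no_overbid S v D \<epsilon> s b \<longrightarrow>
           OPT v s \<le> \<alpha> / (1 - \<epsilon>) * mix_exp_welfare v D \<epsilon> b s"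
proof (intro ballI allI impI)
  fix s b
  assume s: "s \<in> profiles S" and ne: "pure_NE_no_overbid S v D \<epsilon> s b"
  have bp: "b \<in> profiles S" and ble: "\<And>j. b j \<le> s j" using ne
    by (auto simp: pure_NE_no_overbid_def)
  have vs: "valid_setting S v" using assms(1) .
  have S0: "\<And>j x. x \<in> S j \<Longrightarrow> x \<ge> 0" using vs unfolding valid_setting_def by auto
  have b0: "\<And>j. b j \<ge> 0" using bp S0 by (auto simp: profiles_def)
  have beq: "b i = s i" for i
  proof (rule ccontr)
    assume "b i \<noteq> s i"
    with ble have lt: "b i < s i" using order_le_less by blast
    have si: "s i \<in> S i" "b i \<in> S i" using s bp by (auto simp: profiles_def)
    have sb: "s(i := b i) \<in> profiles S" using s si by (auto simp: profiles_def)
    have "v i (s(i := b i)) < v i ((s(i := b i))(i := s i))"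
      using vs sb si lt unfolding valid_setting_def by (metis fun_upd_same)
    moreover have "v i (s(i := b i)) \<ge> 0" using vs sb unfolding valid_setting_def by blast
    ultimately have vpos: "v i s > 0" by simp
    have tp: "b(i := s i) \<in> profiles S" using bp si by (auto simp: profiles_def)
    have ib: "integrable D (\<lambda>M. fst M b i * v i s - snd M b i)"
      using assms(2) bp unfolding univ_ex_post_IC_IR_def by auto
    have it: "integrable D (\<lambda>M. fst M (b(i := s i)) i * v i s - snd M (b(i := s i)) i)"
      using assms(2) tp unfolding univ_ex_post_IC_IR_def by auto
    have I: "(\<integral>M. fst M b i * v i s - snd M b i \<partial>D) \<le>
             (\<integral>M. fst M (b(i := s i)) i * v i s - snd M (b(i := s i)) i \<partial>D)"
      using ib it
    proof (rule integral_mono)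
      fix M assume "M \<in> space D"
      then have "det_ex_post_IC_IR S v M" using assms(2) unfolding univ_ex_post_IC_IR_def by auto
      then show "fst M b i * v i s - snd M b i \<le>
         fst M (b(i := s i)) i * v i s - snd M (b(i := s i)) i"
        using det_raise[OF vs _ bp s ble] by blast
    qed
    have P: "prop_alloc b i * v i s < prop_alloc (b(i := s i)) i * v i s"
      using prop_strict[of b i "s i", OF b0 lt] vpos by simp
    have "mix_exp_utility v D \<epsilon> i b s < mix_exp_utility v D \<epsilon> i (b(i := s i)) s"
      unfolding mix_exp_utility_def
      using I P assms(5,6)
      by (intro add_le_less_mono mult_left_mono mult_strict_left_mono) auto
    moreover have "mix_exp_utility v D \<epsilon> i (b(i := s i)) s \<le> mix_exp_utility v D \<epsilon> i b s"
      using ne si by (auto simp: pure_NE_no_overbid_def)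
    ultimately show False by simp
  qed
  then have bs: "b = s" by auto
  have W: "OPT v s / \<alpha> \<le> exp_welfare_M v D s s" using assms(4) s by (auto simp: alpha_approx_def)
  have nn: "(\<Sum>i\<in>UNIV. prop_alloc s i * v i s) \<ge> 0"
  proof (intro sum_nonneg mult_nonneg_nonneg)
    fix i
    show "v i s \<ge> 0" using vs s unfolding valid_setting_def by blast
    have "s j \<ge> 0" for j using b0 beq by metis
    then have "(\<Sum>j\<in>UNIV. s j) \<ge> 0" by (simp add: sum_nonneg)
    then show "prop_alloc s i \<ge> 0" unfolding prop_alloc_def using \<open>s i \<ge> 0\<close> by simp
  qed
  have "(1 - \<epsilon>) * (OPT v s / \<alpha>) \<le> mix_exp_welfare v D \<epsilon> b s"
    unfolding bs mix_exp_welfare_def using W nn assms(5,6)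
    by (smt (verit) mult_left_mono mult_nonneg_nonneg)
  then show "OPT v s \<le> \<alpha> / (1 - \<epsilon>) * mix_exp_welfare v D \<epsilon> b s"
    using assms(3,6) by (simp add: field_simps)
qed

end
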